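(* Let $h\in\mathbb C(s)$ be a rational function whose poles all belong to $\{0,\infty\}$. If $h^{\iota_1}=h$, then there exists $H\in\mathbb C[1/x]$ such that $H(x(s))=h(s)$. Analogously, if $h^{\iota_2}=h$, then there exists $H\in\mathbb C[1/y]$ such that $H(y(s))=h(s)$.
   Context: $x(s),y(s)\in\mathbb C(s)$ are the coordinates of a fixed rational parametrization of the kernel curve of a genus-zero weighted quadrant walk model, with the following known properties: their divisors on $\mathbb P^1$ are $(x)=0+\infty-Q_1-Q_2$ and $(y)=0+\infty-Q_3-Q_4$ for points $Q_i\notin\{0,\infty\}$; there is a real $q\notin\{-1,1\}$ such that, with $\iota_1(s)=1/s$ and $\iota_2(s)=q/s$, the extension $\mathbb C(s)/\mathbb C(x(s))$ is Galois of degree $2$ with group generated by $h\mapsto h^{\iota_1}$, and $\mathbb C(s)/\mathbb C(y(s))$ is Galois of degree $2$ with group generated by $h\mapsto h^{\iota_2}$. Here $h^\tau=h\circ\tau$. *)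

theory Defs
  imports "HOL-Computational_Algebra.Computational_Algebra" "HOL-Computational_Algebra.Field_as_Ring"
begin

type_synonym rfun = "complex poly fract"

definition rconst :: "complex \<Rightarrow> rfun" where
  "rconst c = Fract [:c:] 1"

definition svar :: rfun where
  "svar = Fract [:0, 1:] 1"

definition peval :: "complex poly \<Rightarrow> rfun \<Rightarrow> rfun" where
  "peval P g = poly (map_poly rconst P) g"

definition rcomp :: "rfun \<Rightarrow> rfun \<Rightarrow> rfun" where
  "rcomp h g = (case quot_of_fract h of (p, q) \<Rightarrow> peval p g / peval q g)"

definition rord :: "rfun \<Rightarrow> complex \<Rightarrow> int" where
  "rord h a = (case quot_of_fract h of (p, q) \<Rightarrow> int (order a p) - int (order a q))"

definition rord_inf :: "rfun \<Rightarrow> int" where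
  "rord_inf h = (case quot_of_fract h of (p, q) \<Rightarrow> int (degree q) - int (degree p))"

text \<open>Points of P^1 are modelled as complex option, with None = \<infinity>.
  Divisor of a nonzero rational function, as a function P^1 \<Rightarrow> int.\<close>
definition rdivisor :: "rfun \<Rightarrow> complex option \<Rightarrow> int" where
  "rdivisor h P = (case P of None \<Rightarrow> rord_inf h | Some a \<Rightarrow> rord h a)"

definition pt :: "complex option \<Rightarrow> complex option \<Rightarrow> int" where
  "pt P Q = (if Q = P then 1 else 0)"

definition rpoles :: "rfun \<Rightarrow> complex option set" where
  "rpoles h = {P. h \<noteq> 0 \<and> rdivisor h P < 0}"

definition gen_field :: "rfun \<Rightarrow> rfun set" where
  "gen_field g = {rcomp R g | R. True}"

text \<open>Fixed field of the automorphism h \<mapsto> h^\<iota> = h \<circ> \<iota>.\<close>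
definition fixed_field :: "rfun \<Rightarrow> rfun set" where
  "fixed_field \<iota> = {h. rcomp h \<iota> = h}"

end

theory Submission
  imports Defs
begin


abbreviation "S \<equiv> to_fract [:0::complex,1:]"

lemma rconst_tf: "rconst c = to_fract [:c:]"
  by (simp add: rconst_def to_fract_def)
lemma svar_tf: "svar = S"
  by (simp add: svar_def to_fract_def)
lemma rconst_0[simp]: "rconst 0 = 0" by (simp add: rconst_tf)
lemma rconst_add: "rconst (a+b) = rconst a + rconst b" by (simp add: rconst_tf flip: to_fract_add)
lemma rconst_mult: "rconst (a*b) = rconst a * rconst b"
  by (simp add: rconst_tf flip: to_fract_mult)

lemma peval_pCons[simp]: "peval (pCons a P) g = rconst a + g * peval P g"
  by (simp add: peval_def map_poly_pCons)
lemma peval_0[simp]: "peval 0 g = 0" by (simp add: peval_def)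

lemma peval_add[simp]: "peval (P + Q) g = peval P g + peval Q g"
proof (induction P arbitrary: Q)
  case 0 then show ?case by simp
next
  case (pCons a P)
  show ?case
  proof (cases Q rule: pCons_cases)
    case (pCons b Q')
    then show ?thesis using pCons.IH[of Q'] by (simp add: rconst_add algebra_simps)
  qed
qed

lemma peval_smult[simp]: "peval (smult a P) g = rconst a * peval P g"
  by (induction P) (simp_all add: rconst_mult algebra_simps)

lemma peval_mult[simp]: "peval (P * Q) g = peval P g * peval Q g"
  by (induction P) (simp_all add: algebra_simps)

lemma peval_const[simp]: "peval [:c:] g = rconst c" by simp
lemma rconst_1[simp]: "rconst 1 = 1" by (metis rconst_tf one_pCons to_fract_1)
lemma peval_1[simp]: "peval 1 g = 1" by (simp add: one_pCons del: pCons_one)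

lemma peval_uminus[simp]: "peval (- P) g = - peval P g"
  using peval_add[of P "-P" g] by (simp add: eq_neg_iff_add_eq_0 add.commute)
lemma peval_diff[simp]: "peval (P - Q) g = peval P g - peval Q g"
  using peval_add[of "P - Q" Q g] by simp
lemma peval_power[simp]: "peval (P ^ n) g = peval P g ^ n"
  by (induction n) simp_all
lemma peval_X[simp]: "peval [:0,1:] g = g"
  by simp
lemma peval_S[simp]: "peval P S = to_fract P"
proof (induction P)
  case (pCons a P)
  have "pCons a P = [:a:] + [:0,1:] * P" by simp
  then have "to_fract (pCons a P) = rconst a + S * to_fract P"
    by (metis rconst_tf to_fract_add to_fract_mult)
  then show ?case using pCons by simp
qed simp

lemma rcomp_frac:
  assumes b: "b \<noteq> 0" and gb: "peval b g \<noteq> 0"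
  shows "rcomp (to_fract a / to_fract b) g = peval a g / peval b g"
proof -
  define h where "h = to_fract a / to_fract b"
  obtain p' q' where qo: "quot_of_fract h = (p', q')" by (cases "quot_of_fract h") auto
  have cp: "coprime p' q'" using coprime_quot_of_fract[of h] qo by simp
  have q'0: "q' \<noteq> 0" using snd_quot_of_fract_nonzero[of h] qo by simp
  have "h = Fract p' q'" using Fract_quot_of_fract[of h] qo by simp
  then have "to_fract a / to_fract b = to_fract p' / to_fract q'" by (simp add: h_def Fract_conv_to_fract)
  then have "to_fract a * to_fract q' = to_fract p' * to_fract b" using b q'0
    by (simp add: field_simps)
  then have eq: "a * q' = p' * b" by (metis to_fract_eq_iff to_fract_mult)
  then have "q' dvd p' * b" by (metis dvd_triv_right)
  then have "q' dvd b" using cp by (simp add: coprime_commute coprime_dvd_mult_right_iff)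
  then obtain r where "b = q' * r" by blast
  then have "peval b g = peval q' g * peval r g" by simp
  then have gq: "peval q' g \<noteq> 0" using gb by auto
  have "peval a g * peval q' g = peval p' g * peval b g" using eq
    by (metis peval_mult)
  then have "peval p' g / peval q' g = peval a g / peval b g" using gq gb
    by (simp add: field_simps)
  then show ?thesis using qo by (simp add: rcomp_def h_def)
qed

lemma S_nz[simp]: "S \<noteq> 0" by simp
lemma rconst_eq0[simp]: "rconst c = 0 \<longleftrightarrow> c = 0" by (simp add: rconst_tf)
lemma rconst_uminus: "rconst (- a) = - rconst a" by (simp add: rconst_tf flip: to_fract_uminus)
lemma rconst_power: "rconst (a ^ n) = rconst a ^ n" by (induction n) (simp_all add: rconst_mult)
lemma to_fract_power: "to_fract (P ^ n) = to_fract P ^ n" by (induction n) simp_all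

lemma peval_pcompose: "peval (pcompose P Q) g = peval P (peval Q g)"
  by (induction P) (simp_all add: pcompose_pCons)

lemma to_fract_smult: "to_fract (smult c P) = rconst c * to_fract P"
  by (simp add: rconst_tf flip: to_fract_mult)

lemma L_lemma:
  assumes "degree p \<le> n"
  shows "\<exists>r. peval p (rconst t / S) * S ^ n = to_fract r"
  using assms
proof (induction p arbitrary: n)
  case 0 then show ?case by (intro exI[of _ 0]) simp
next
  case (pCons a p)
  show ?case
  proof (cases "p = 0")
    case True
    then show ?thesis by (intro exI[of _ "[:a:] * [:0,1:]^n"]) (simp only: to_fract_mult to_fract_power, simp add: rconst_tf)
  next
    case False
    then have n: "degree p \<le> n - 1" "n \<ge> 1" using pCons.prems by auto
    obtain r where r: "peval p (rconst t / S) * S ^ (n-1) = to_fract r" using pCons.IH[OF n(1)] by blast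
    have Sn: "S ^ n = S * S^(n-1)" using n(2) by (metis power_eq_if not_one_le_zero)
    have "peval (pCons a p) (rconst t / S) * S ^ n = rconst a * S^n + rconst t * (peval p (rconst t / S) * S ^ (n-1))"
      by (simp add: Sn field_simps)
    also have "\<dots> = to_fract (smult a ([:0,1:]^n) + smult t r)" using r by (simp add: to_fract_smult to_fract_power)
    finally show ?thesis by blast
  qed
qed

lemma M_lemma:
  assumes t: "t \<noteq> 0"
  shows "\<forall>p. degree p \<le> 2*k \<longrightarrow> peval p (rconst t / S) * S^k = to_fract p * (rconst t / S)^k \<longrightarrow>
     (\<exists>H. to_fract p / S^k = peval H (S + rconst t / S))"
proof (induction k)
  case 0
  show ?case
  proof (intro allI impI)
    fix p :: "complex poly" assume "degree p \<le> 2*0"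
    then have "degree p = 0" by simp
    then obtain a where "p = [:a:]" by (elim degree_eq_zeroE)
    then show "\<exists>H. to_fract p / S^0 = peval H (S + rconst t / S)"
      by (intro exI[of _ p]) (simp add: rconst_tf)
  qed
next
  case (Suc k)
  show ?case
  proof (intro allI impI)
    fix p :: "complex poly"
    assume dp: "degree p \<le> 2 * Suc k"
      and I: "peval p (rconst t / S) * S ^ Suc k = to_fract p * (rconst t / S) ^ Suc k"
    define T where "T = rconst t"
    define \<iota> where "\<iota> = T / S"
    have T0: "T \<noteq> 0" using t by (simp add: T_def)
    have i0: "\<iota> \<noteq> 0" using T0 by (simp add: \<iota>_def)
    define B where "B = [:t,0,1:]"
    define c where "c = coeff p (2 * Suc k)"
    define p' where "p' = p - smult c (B ^ Suc k)"
    have B1: "(peval B \<iota>) * S = to_fract B * \<iota>"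
      unfolding peval_S[symmetric, of B] by (simp add: B_def \<iota>_def T_def field_simps power2_eq_square del: peval_S)
    have IB: "peval (B ^ Suc k) \<iota> * S ^ Suc k = to_fract (B ^ Suc k) * \<iota> ^ Suc k"
    proof -
      have "peval (B ^ Suc k) \<iota> * S ^ Suc k = (peval B \<iota> * S) ^ Suc k" by (simp only: peval_power power_mult_distrib)
      also have "\<dots> = (to_fract B * \<iota>) ^ Suc k" by (simp only: B1)
      also have "\<dots> = to_fract (B ^ Suc k) * \<iota> ^ Suc k" by (simp only: to_fract_power power_mult_distrib)
      finally show ?thesis .
    qed
    have e1: "peval p' \<iota> = peval p \<iota> - rconst c * peval (B ^ Suc k) \<iota>" by (simp add: p'_def)
    have e2: "to_fract p' = to_fract p - rconst c * to_fract (B ^ Suc k)" by (simp add: p'_def to_fract_smult)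
    have I0: "peval p \<iota> * S ^ Suc k = to_fract p * \<iota> ^ Suc k" using I by (simp add: \<iota>_def T_def)
    have I': "peval p' \<iota> * S ^ Suc k = to_fract p' * \<iota> ^ Suc k"
      unfolding e1 e2 left_diff_distrib mult.assoc I0 IB by (rule refl)
    have B0: "B \<noteq> 0" and dB2: "degree B = 2" and lB1: "coeff B (degree B) = 1" by (simp_all add: B_def)
    have dB: "degree (B ^ Suc k) = 2 * Suc k" by (simp only: degree_power_eq[OF B0] dB2 mult.commute)
    have "coeff (B ^ Suc k) (degree (B ^ Suc k)) = 1" by (simp only: lead_coeff_power lB1 power_one)
    then have lB: "coeff (B ^ Suc k) (2 * Suc k) = 1" by (simp only: dB)
    have c0: "coeff p' (2 * Suc k) = 0" unfolding p'_def coeff_diff coeff_smult lB c_def by simp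
    have dp': "degree p' \<le> 2 * Suc k" unfolding p'_def
      by (rule order.trans[OF degree_diff_le_max]) (use dp dB in auto)
    have dp'': "degree p' \<le> 2 * k + 1"
    proof (cases "p' = 0")
      case False
      then have "degree p' \<noteq> 2 * Suc k" using c0 leading_coeff_0_iff by metis
      then show ?thesis using dp' by simp
    qed simp
    obtain r where r: "peval p' \<iota> * S ^ (2*k+1) = to_fract r"
      using L_lemma[OF dp''] unfolding \<iota>_def T_def by blast
    have pw: "S * S ^ (2*k+1) = S ^ Suc k * S ^ Suc k"
      by (simp flip: power_add power_Suc add: mult_2)
    have "to_fract ([:0,1:] * r) = S * to_fract r" by (simp only: to_fract_mult)
    also have "\<dots> = S * (peval p' \<iota> * S ^ (2*k+1))" by (simp only: r)
    also have "\<dots> = peval p' \<iota> * (S * S ^ (2*k+1))" by (simp only: mult_ac)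
    also have "\<dots> = peval p' \<iota> * S ^ Suc k * S ^ Suc k" by (simp only: pw mult.assoc)
    also have "\<dots> = to_fract p' * \<iota> ^ Suc k * S ^ Suc k" by (simp only: I')
    also have "\<dots> = to_fract p' * T ^ Suc k" by (simp add: \<iota>_def power_divide)
    also have "\<dots> = to_fract (smult (t ^ Suc k) p')" by (simp only: to_fract_smult rconst_power T_def mult.commute)
    finally have "[:0,1:] * r = smult (t ^ Suc k) p'" by (simp only: to_fract_eq_iff)
    then have "coeff (smult (t ^ Suc k) p') 0 = 0" by (metis coeff_mult_0 coeff_pCons_0 mult_zero_left)
    then have cp0: "coeff p' 0 = 0" using t by simp
    obtain a p'' where pp: "p' = pCons a p''" by (cases p' rule: pCons_cases) auto
    then have a0: "a = 0" using cp0 by simp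
    have dp3: "degree p'' \<le> 2 * k" using dp'' pp a0
      by (cases "p'' = 0") auto
    have "peval p' \<iota> = \<iota> * peval p'' \<iota>" using pp a0 by simp
    moreover have "to_fract p' = S * to_fract p''" using pp a0
      by (metis peval_S peval_pCons rconst_0 add_0)
    ultimately have "\<iota> * S * (peval p'' \<iota> * S ^ k) = \<iota> * S * (to_fract p'' * \<iota> ^ k)"
      using I' by (simp add: mult_ac)
    then have I'': "peval p'' \<iota> * S ^ k = to_fract p'' * \<iota> ^ k" using i0 by simp
    obtain H' where H': "to_fract p'' / S ^ k = peval H' (S + T / S)"
      using Suc.IH dp3 I'' unfolding \<iota>_def T_def by blast
    have "to_fract p = to_fract p' + rconst c * to_fract B ^ Suc k"
      by (simp add: e2 to_fract_power)
    then have "to_fract p / S ^ Suc k = to_fract p' / S ^ Suc k + rconst c * (to_fract B / S) ^ Suc k"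
      by (simp add: power_divide add_divide_distrib)
    also have "to_fract B / S = S + T / S"
      unfolding peval_S[symmetric, of B] by (simp add: B_def T_def field_simps power2_eq_square del: peval_S)
    also have "to_fract p' / S ^ Suc k = to_fract p'' / S ^ k"
      using \<open>to_fract p' = S * to_fract p''\<close> by simp
    finally have "to_fract p / S ^ Suc k = peval (H' + smult c ([:0,1:] ^ Suc k)) (S + T / S)"
      using H' by simp
    then show "\<exists>H. to_fract p / S ^ Suc k = peval H (S + rconst t / S)" unfolding T_def by blast
  qed
qed



lemma coprime_root:
  fixes p q :: "complex poly"
  assumes "coprime p q" "poly p a = 0" "poly q a = 0"
  shows False
proof -
  have "[:-a,1:] dvd p" "[:-a,1:] dvd q" using assms(2,3) by (simp_all add: poly_eq_0_iff_dvd)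
  then have "is_unit [:-a,1:]" using assms(1) coprime_common_divisor by blast
  then show False by (simp add: is_unit_iff_degree)
qed

lemma only_root0:
  fixes p :: "complex poly"
  assumes p0: "p \<noteq> 0" and nr: "\<And>a. a \<noteq> 0 \<Longrightarrow> poly p a \<noteq> 0"
  shows "\<exists>c. c \<noteq> 0 \<and> p = smult c ([:0,1:] ^ order 0 p)"
proof -
  obtain r where r: "p = [:-0,1:] ^ order 0 p * r" and nd: "\<not> [:-0,1:] dvd r"
    using order_decomp[OF p0] by blast
  have nr': "poly r a \<noteq> 0" for a
  proof (cases "a = 0")
    case True then show ?thesis using nd by (simp add: poly_eq_0_iff_dvd)
  next
    case False
    then have "poly p a \<noteq> 0" by (rule nr)
    then show ?thesis by (subst (asm) r) auto
  qed
  have "\<exists>c l. c \<noteq> 0 \<and> l = 0 \<and> r = pCons c l"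
    using fundamental_theorem_of_algebra_alt[of r] nr' by blast
  then obtain c where c: "c \<noteq> 0" "r = [:c:]" by blast
  show ?thesis using r c by (intro exI[of _ c]) (simp add: mult.commute)
qed

lemma h_form:
  assumes h0: "h \<noteq> 0" and hp: "rpoles h \<subseteq> {Some 0, None}"
  shows "\<exists>p k. degree p \<le> 2*k \<and> h = to_fract p / S ^ k"
proof -
  obtain p q where qo: "quot_of_fract h = (p, q)" by (cases "quot_of_fract h") auto
  have cp: "coprime p q" using coprime_quot_of_fract[of h] qo by simp
  have q0: "q \<noteq> 0" using snd_quot_of_fract_nonzero[of h] qo by simp
  have hpq: "h = to_fract p / to_fract q" using Fract_quot_of_fract[of h] qo by (simp add: Fract_conv_to_fract)
  have nr: "poly q a \<noteq> 0" if a: "a \<noteq> 0" for a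
  proof
    assume qa: "poly q a = 0"
    have "Some a \<notin> rpoles h" using hp a by auto
    then have "rdivisor h (Some a) \<ge> 0" using h0 by (simp add: rpoles_def)
    then have "order a q \<le> order a p" using qo by (simp add: rdivisor_def rord_def)
    moreover have "order a q \<noteq> 0" using qa q0 order_root by blast
    ultimately have "poly p a = 0" using order_root by (metis le_zero_eq)
    then show False using coprime_root[OF cp _ qa] by blast
  qed
  obtain c where c: "c \<noteq> 0" "q = smult c ([:0,1:] ^ order 0 q)"
    using only_root0[OF q0 nr] by blast
  define k where "k = order 0 q"
  define n where "n = degree p"
  define p' where "p' = smult (inverse c) p * [:0,1:] ^ n"
  have "degree p' \<le> n + n" unfolding p'_def
    by (rule order.trans[OF degree_mult_le]) (simp add: n_def degree_power_eq)
  then have dp: "degree p' \<le> 2 * (k + n)" by simp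
  have tq: "to_fract q = rconst c * S ^ k" by (subst c(2)) (simp add: to_fract_smult to_fract_power k_def)
  have ic: "rconst (inverse c) = inverse (rconst c)"
    using c(1) by (metis rconst_mult rconst_1 right_inverse inverse_unique)
  have rc: "rconst c \<noteq> 0" using c(1) by simp
  have "to_fract p' / S ^ (k + n) = inverse (rconst c) * to_fract p / S ^ k"
    by (simp add: p'_def to_fract_smult to_fract_power ic power_add)
  also have "\<dots> = h" using rc by (simp add: hpq tq field_simps)
  finally have "h = to_fract p' / S ^ (k + n)" ..
  then show ?thesis using dp by blast
qed



lemma x_form:
  assumes x0: "x \<noteq> 0" and d0: "rdivisor x (Some 0) = 1" and dinf: "rdivisor x None = 1"
    and dn: "\<And>a. a \<noteq> 0 \<Longrightarrow> rdivisor x (Some a) \<le> 0"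
  shows "\<exists>c q. c \<noteq> 0 \<and> degree q = 2 \<and> coeff q 0 \<noteq> 0 \<and> x = to_fract (smult c [:0,1:]) / to_fract q"
proof -
  obtain p q where qo: "quot_of_fract x = (p, q)" by (cases "quot_of_fract x") auto
  have cp: "coprime p q" using coprime_quot_of_fract[of x] qo by simp
  have q0: "q \<noteq> 0" using snd_quot_of_fract_nonzero[of x] qo by simp
  have p0: "p \<noteq> 0" using fst_quot_of_fract_eq_0_iff[of x] qo x0 by simp
  have hpq: "x = to_fract p / to_fract q" using Fract_quot_of_fract[of x] qo by (simp add: Fract_conv_to_fract)
  have o0: "int (order 0 p) - int (order 0 q) = 1" using d0 qo by (simp add: rdivisor_def rord_def)
  then have "order 0 p \<noteq> 0" by linarith
  then have "poly p 0 = 0" using order_root by blast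
  then have pq0: "poly q 0 \<noteq> 0" using coprime_root[OF cp] by blast
  then have "order 0 q = 0" using order_root by blast
  then have op: "order 0 p = 1" using o0 by linarith
  have nr: "poly p a \<noteq> 0" if a: "a \<noteq> 0" for a
  proof
    assume pa: "poly p a = 0"
    have "order a p \<le> order a q" using dn[OF a] qo by (simp add: rdivisor_def rord_def)
    moreover have "order a p \<noteq> 0" using pa p0 order_root by blast
    ultimately have "poly q a = 0" using order_root by (metis le_zero_eq)
    then show False using coprime_root[OF cp pa] by blast
  qed
  obtain c where c: "c \<noteq> 0" "p = smult c ([:0,1:] ^ order 0 p)"
    using only_root0[OF p0 nr] by blast
  then have pc: "p = smult c [:0,1:]" using op by simp
  have "int (degree q) - int (degree p) = 1" using dinf qo by (simp add: rdivisor_def rord_inf_def)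
  then have "degree q = 2" using pc c by simp
  moreover have "coeff q 0 \<noteq> 0" using pq0 by (simp add: poly_0_coeff_0)
  ultimately show ?thesis using hpq pc c by blast
qed

lemma rconst_divide: "rconst (a / b) = rconst a / rconst b"
proof (cases "b = 0")
  case False
  have "rconst (a / b) * rconst b = rconst a" using False by (simp flip: rconst_mult)
  then show ?thesis using False by (simp add: field_simps)
qed simp

lemma x_inv:
  assumes c: "c \<noteq> 0" and dq: "degree q = 2" and q0: "coeff q 0 \<noteq> 0"
    and xe: "x = to_fract (smult c [:0,1:]) / to_fract q"
    and inv: "rcomp x (rconst t / S) = x"
  shows "t \<noteq> 0 \<and> (\<exists>a b. a \<noteq> 0 \<and> inverse x = rconst a * (S + rconst t / S) + rconst b)"
proof -
  define a0 a1 a2 where "a0 = coeff q 0" and "a1 = coeff q 1" and "a2 = coeff q 2"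
  have qe: "q = [:a0, a1, a2:]" unfolding a0_def a1_def a2_def using dq
    by (intro poly_eqI) (auto simp: coeff_pCons coeff_eq_0 numeral_2_eq_2 split: nat.split)
  have qnz: "q \<noteq> 0" using dq by auto
  have a2: "a2 \<noteq> 0" using dq qnz unfolding a2_def by (metis leading_coeff_0_iff)
  define T where "T = rconst t"
  define \<iota> where "\<iota> = T / S"
  define R where "R = [:t^2*a2, t*a1, a0:]"
  have pR: "peval q \<iota> * S^2 = to_fract R"
    unfolding peval_S[symmetric, of R]
    by (simp add: qe R_def rconst_mult rconst_power \<iota>_def T_def field_simps power2_eq_square del: peval_S)
  have gq: "peval q \<iota> \<noteq> 0"
  proof
    assume "peval q \<iota> = 0"
    then have "R = 0" using pR by simp
    then show False using q0 by (simp add: R_def a0_def)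
  qed
  have tq: "to_fract q \<noteq> 0" using qnz by simp
  have rc: "rconst c \<noteq> 0" using c by simp
  have xe': "x = rconst c * S / to_fract q" using xe by (simp only: to_fract_smult peval_S)
  have inv': "rcomp x \<iota> = x" by (simp only: \<iota>_def T_def inv)
  have pc: "peval (smult c [:0,1:]) \<iota> = rconst c * \<iota>" by (simp only: peval_smult peval_X)
  have "rcomp x \<iota> = peval (smult c [:0,1:]) \<iota> / peval q \<iota>"
    unfolding xe by (rule rcomp_frac[OF qnz gq])
  then have "rconst c * \<iota> / peval q \<iota> = rconst c * S / to_fract q"
    by (simp only: pc inv' flip: xe')
  then have e1: "\<iota> * to_fract q = S * peval q \<iota>"
    using gq tq rc by (simp add: field_simps)
  have "S * (T * to_fract q) = S * to_fract R"
  proof -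
    have "S * (T * to_fract q) = S * S * (\<iota> * to_fract q)" by (simp add: \<iota>_def field_simps)
    also have "\<dots> = S * (peval q \<iota> * S^2)" by (simp add: e1 power2_eq_square mult_ac)
    finally show ?thesis by (simp add: pR)
  qed
  then have "to_fract (smult t q) = to_fract R" by (simp add: to_fract_smult T_def)
  then have eq: "smult t q = R" by simp
  have "coeff (smult t q) 2 = coeff R 2" by (simp only: eq)
  then have e2: "t * a2 = a0" by (simp add: R_def a2_def numeral_2_eq_2)
  then have t0: "t \<noteq> 0" using q0 a0_def by auto
  have "inverse x = to_fract q / (rconst c * S)" using xe' by simp
  also have "\<dots> = rconst (a2 / c) * (S + T / S) + rconst (a1 / c)"
    unfolding peval_S[symmetric, of q]
    using rc by (simp add: qe rconst_divide T_def e2[symmetric] rconst_mult power2_eq_square del: peval_S)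
      (simp add: field_simps)
  finally have "inverse x = rconst (a2 / c) * (S + rconst t / S) + rconst (a1 / c)" by (simp only: T_def)
  moreover have "a2 / c \<noteq> 0" using a2 c by simp
  ultimately show ?thesis using t0 by blast
qed



lemma half:
  assumes x0: "x \<noteq> 0" and d0: "rdivisor x (Some 0) = 1" and dinf: "rdivisor x None = 1"
    and dn: "\<And>a. a \<noteq> 0 \<Longrightarrow> rdivisor x (Some a) \<le> 0"
    and gal: "fixed_field (rconst t / svar) = gen_field x"
  shows "\<forall>h. rpoles h \<subseteq> {Some 0, None} \<longrightarrow> rcomp h (rconst t / svar) = h \<longrightarrow>
            (\<exists>H :: complex poly. peval H (inverse x) = h)"
proof (intro allI impI)
  fix h assume hp: "rpoles h \<subseteq> {Some 0, None}" and hi: "rcomp h (rconst t / svar) = h"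
  define \<iota> where "\<iota> = rconst t / S"
  have "rcomp (to_fract [:0,1:] / to_fract 1) x = peval [:0,1:] x / peval 1 x"
    by (rule rcomp_frac) simp_all
  then have "x = rcomp S x" by simp
  then have "x \<in> gen_field x" unfolding gen_field_def by blast
  then have "x \<in> fixed_field (rconst t / svar)" using gal by simp
  then have xi: "rcomp x \<iota> = x" by (simp add: fixed_field_def svar_tf \<iota>_def)
  obtain c q where cq: "c \<noteq> 0" "degree q = 2" "coeff q 0 \<noteq> 0" "x = to_fract (smult c [:0,1:]) / to_fract q"
    using x_form[OF x0 d0 dinf dn] by blast
  obtain a b where t0: "t \<noteq> 0" and a0: "a \<noteq> 0" and ix: "inverse x = rconst a * (S + rconst t / S) + rconst b"
    using x_inv[OF cq] xi unfolding \<iota>_def by blast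
  have u0: "peval [:- b / a, 1 / a:] (rconst a * (S + rconst t / S) + rconst b) = S + rconst t / S"
    using a0 by (simp add: rconst_divide rconst_uminus field_simps)
  have u: "peval [:- b / a, 1 / a:] (inverse x) = S + rconst t / S"
    using u0 unfolding ix[symmetric] .
  have "\<exists>H. h = peval H (S + rconst t / S)"
  proof (cases "h = 0")
    case True then show ?thesis by (intro exI[of _ 0]) simp
  next
    case False
    obtain p k where pk: "degree p \<le> 2*k" "h = to_fract p / S ^ k" using h_form[OF False hp] by blast
    have i0: "\<iota> \<noteq> 0" using t0 by (simp add: \<iota>_def)
    have hk: "h = to_fract p / to_fract ([:0,1:] ^ k)" using pk by (simp add: to_fract_power)
    have "rcomp h \<iota> = peval p \<iota> / peval ([:0,1:] ^ k) \<iota>"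
      unfolding hk by (rule rcomp_frac) (use i0 in simp_all)
    then have "peval p \<iota> / \<iota> ^ k = to_fract p / S ^ k" using hi pk by (simp add: svar_tf \<iota>_def)
    then have "peval p \<iota> * S ^ k = to_fract p * \<iota> ^ k" using i0 by (simp add: field_simps)
    then show ?thesis using M_lemma[OF t0, of k] pk unfolding \<iota>_def by metis
  qed
  then obtain H where "h = peval H (S + rconst t / S)" by blast
  then have "peval (pcompose H [:- b / a, 1 / a:]) (inverse x) = h" by (simp only: peval_pcompose u)
  then show "\<exists>H :: complex poly. peval H (inverse x) = h" by blast
qed


theorem lemma2p4:
  fixes x y :: rfun and Q1 Q2 Q3 Q4 :: complex and q :: real
  assumes Q: "Q1 \<noteq> 0" "Q2 \<noteq> 0" "Q3 \<noteq> 0" "Q4 \<noteq> 0"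
    and x_nz: "x \<noteq> 0" and y_nz: "y \<noteq> 0"
    and div_x: "rdivisor x = (\<lambda>P. pt (Some 0) P + pt None P - pt (Some Q1) P - pt (Some Q2) P)"
    and div_y: "rdivisor y = (\<lambda>P. pt (Some 0) P + pt None P - pt (Some Q3) P - pt (Some Q4) P)"
    and q: "q \<noteq> 1" "q \<noteq> -1"
    and gal_x: "fixed_field (rconst 1 / svar) = gen_field x"
    and gal_y: "fixed_field (rconst (complex_of_real q) / svar) = gen_field y"
  shows "(\<forall>h. rpoles h \<subseteq> {Some 0, None} \<longrightarrow> rcomp h (rconst 1 / svar) = h \<longrightarrow>
            (\<exists>H :: complex poly. peval H (inverse x) = h))
       \<and> (\<forall>h. rpoles h \<subseteq> {Some 0, None} \<longrightarrow> rcomp h (rconst (complex_of_real q) / svar) = h \<longrightarrow>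
            (\<exists>H :: complex poly. peval H (inverse y) = h))"
proof
  show "\<forall>h. rpoles h \<subseteq> {Some 0, None} \<longrightarrow> rcomp h (rconst 1 / svar) = h \<longrightarrow>
            (\<exists>H :: complex poly. peval H (inverse x) = h)"
    by (rule half[OF x_nz _ _ _ gal_x]) (use Q in \<open>simp_all add: div_x pt_def\<close>)
  show "\<forall>h. rpoles h \<subseteq> {Some 0, None} \<longrightarrow> rcomp h (rconst (complex_of_real q) / svar) = h \<longrightarrow>
            (\<exists>H :: complex poly. peval H (inverse y) = h)"
    by (rule half[OF y_nz _ _ _ gal_y]) (use Q in \<open>simp_all add: div_y pt_def\<close>)
qed

end
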